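(* Consider the system $x[k+1]=Ax[k]+Bu[k]+w[k]$, $y[k]=x[k]+v[k]$ in closed loop with the controller $x_K[k+1]=A_Kx_K[k]+B_Ky[k]$, $u[k]=C_Kx_K[k]+D_Ky[k]$ ($x\in\mathbb{R}^n$, $x_K\in\mathbb{R}^{n_K}$), with closed-loop matrices $$A_{CL}=\begin{bmatrix}A+BD_K & BC_K\\ B_K & A_K\end{bmatrix},\qquad B_{CL}=\begin{bmatrix}I_n & BD_K\\ O & B_K\end{bmatrix}.$$ Let $\eta\in(0,1)$, let $\widetilde H_I\in\mathbb{R}^{(n+n_K)\times(n+n_K)}$ with $\det(\widetilde H_I)\neq0$, and let $$\widetilde\Omega_I:=\{\xi\in\mathbb{R}^{n+n_K}:-1_{n+n_K}\le\widetilde H_I\xi\le 1_{n+n_K}\}.$$ Let $\varepsilon_s$ satisfy $\varepsilon_p+\varepsilon_m<\varepsilon_s<1$, and assume: C1) $A_{CL}\widetilde\Omega_I\oplus B_{CL}\mathcal{Z}\subseteq\eta\,\widetilde\Omega_I$; C2) $[I_n\ O]\,\widetilde\Omega_I\subseteq(\varepsilon_s-\varepsilon_p-\varepsilon_m)\,\mathcal{S}$. Then: (a) the set $\Omega_I:=[I_n\ O]\widetilde\Omega_I\oplus\mathcal{N}$ satisfies: I1) $\Omega_I\subseteq\varepsilon_s\mathcal{S}$; I2) $\{r\in\mathbb{R}^n:\|r\|\le\alpha\}\subseteq\Omega_I\ominus\mathcal{N}$ with $\alpha=1/\|\widetilde H_I\|$; I3) $\bigoplus_{i=0}^N[I_n\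 O]A_{CL}^iB_{CL}\mathcal{Z}\subseteq\beta(\Omega_I\ominus\mathcal{N})$ for all $N\in\mathbb{N}$, with $\beta=\eta$; (b) the matrix $A_{CL}$ is Schur.
   Context: Notation: $\oplus$ Minkowski sum, $\ominus$ Pontryagin difference ($\mathcal{X}\ominus\mathcal{Y}=\{x:x+y\in\mathcal{X}\ \forall y\in\mathcal{Y}\}$), $(-\mathcal{V})=\{-v:v\in\mathcal{V}\}$, $1_p$ the all-ones vector of dimension $p$, vector inequalities componentwise, $\|\cdot\|$ the Euclidean norm / induced matrix 2-norm, $[I_n\ O]$ the projection onto the first $n$ coordinates. Standing assumptions: $\mathcal{W},\mathcal{V},\mathcal{D},\mathcal{S},\mathcal{X}\subset\mathbb{R}^n$ are polytopes containing the origin in their interiors, $\mathcal{S}\subset\mathcal{X}$; $\varepsilon_p,\varepsilon_m\in(0,1)$ satisfy $\mathcal{V}\subseteq\varepsilon_p\mathcal{S}$ and $(-\mathcal{V})\subseteq\varepsilon_m\mathcal{S}$; some closed Euclidean ball of positive radius centered at $0$ lies in $\mathcal{S}$; $A\mathcal{S}\oplus\mathcal{W}\oplus\mathcal{D}\subseteq\mathcal{X}$. Define $\mathcal{Z}:=\mathcal{W}\times\mathcal{V}\subset\mathbb{R}^{2n}$ and $\mathcal{N}:=(-\mathcal{V})\oplus\mathcal{V}$. *)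

theory Defs
  imports "HOL-Analysis.Analysis"
begin

definition msum :: "'a::ab_group_add set \<Rightarrow> 'a set \<Rightarrow> 'a set" where
  "msum X Y = {x + y | x y. x \<in> X \<and> y \<in> Y}"

definition pdiff :: "'a::ab_group_add set \<Rightarrow> 'a set \<Rightarrow> 'a set" where
  "pdiff X Y = {x. \<forall>y\<in>Y. x + y \<in> X}"

fun bigmsum :: "(nat \<Rightarrow> 'a::ab_group_add set) \<Rightarrow> nat \<Rightarrow> 'a set" where
  "bigmsum F 0 = F 0"
| "bigmsum F (Suc N) = msum (bigmsum F N) (F (Suc N))"

fun matpow :: "('a::comm_ring_1)^'n^'n \<Rightarrow> nat \<Rightarrow> 'a^'n^'n" where
  "matpow M 0 = mat 1"
| "matpow M (Suc k) = M ** matpow M k"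

definition ACL :: "real^'n^'n \<Rightarrow> real^'u^'n \<Rightarrow> real^'k^'k \<Rightarrow> real^'n^'k
    \<Rightarrow> real^'k^'u \<Rightarrow> real^'n^'u \<Rightarrow> real^('n + 'k)^('n + 'k)" where
  "ACL A B AK BK CK DK = (\<chi> i j. case i of
       Inl a \<Rightarrow> (case j of Inl b \<Rightarrow> (A + B ** DK) $ a $ b | Inr b \<Rightarrow> (B ** CK) $ a $ b)
     | Inr a \<Rightarrow> (case j of Inl b \<Rightarrow> BK $ a $ b | Inr b \<Rightarrow> AK $ a $ b))"

text \<open>B_CL acts on z = (w, v) in R^(2n), indexed by 'n + 'n (Inl = w, Inr = v).\<close>
definition BCL :: "real^'u^'n \<Rightarrow> real^'n^'k \<Rightarrow> real^'n^'u \<Rightarrow> real^('n + 'n)^('n + 'k)" where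
  "BCL B BK DK = (\<chi> i j. case i of
       Inl a \<Rightarrow> (case j of Inl b \<Rightarrow> (mat 1 :: real^'n^'n) $ a $ b | Inr b \<Rightarrow> (B ** DK) $ a $ b)
     | Inr a \<Rightarrow> (case j of Inl b \<Rightarrow> 0 | Inr b \<Rightarrow> BK $ a $ b))"

text \<open>Z = W \<times> V as a subset of R^(2n).\<close>
definition Zset :: "(real^'n) set \<Rightarrow> (real^'n) set \<Rightarrow> (real^('n + 'n)) set" where
  "Zset W V = {z. (\<chi> i. z $ Inl i) \<in> W \<and> (\<chi> i. z $ Inr i) \<in> V}"

definition proj1 :: "real^('n + 'k::finite) \<Rightarrow> real^'n" where
  "proj1 \<xi> = (\<chi> i. \<xi> $ Inl i)"

definition OmegaT :: "real^'m^'m \<Rightarrow> (real^'m) set" where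
  "OmegaT H = {\<xi>. \<forall>i. -1 \<le> (H *v \<xi>) $ i \<and> (H *v \<xi>) $ i \<le> 1}"

definition schur :: "real^'m^'m \<Rightarrow> bool" where
  "schur M \<longleftrightarrow> (\<forall>(c::complex) (v::complex^'m). v \<noteq> 0 \<and>
      (\<chi> i j. complex_of_real (M $ i $ j)) *v v = c *s v \<longrightarrow> cmod c < 1)"

end

theory Submission
  imports Defs
begin

lemma ker_lemma:
  fixes H :: "real^'m^'m"
  assumes "det H \<noteq> 0" "H *v x = 0" shows "x = 0"
proof -
  have "invertible H" using assms(1) invertible_det_nz by blast
  then obtain B where "B ** H = mat 1" unfolding invertible_def by blast
  then show ?thesis using matrix_left_invertible_ker assms(2) by blast
qed

lemma conv_add:
  fixes S :: "'a::real_vector set"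
  assumes cS: "convex S" and a: "a \<ge> 0" and b: "b \<ge> 0"
    and x: "x \<in> (\<lambda>s. a *\<^sub>R s) ` S" and y: "y \<in> (\<lambda>s. b *\<^sub>R s) ` S"
  shows "x + y \<in> (\<lambda>s. (a + b) *\<^sub>R s) ` S"
proof -
  obtain s1 s2 where s: "s1 \<in> S" "s2 \<in> S" "x = a *\<^sub>R s1" "y = b *\<^sub>R s2" using x y by blast
  show ?thesis
  proof (cases "a + b = 0")
    case True
    then have "a = 0" "b = 0" using a b by auto
    then show ?thesis using s by (intro image_eqI[of _ _ s1]) auto
  next
    case False
    then have pos: "a + b > 0" using a b by auto
    let ?s = "(a/(a+b)) *\<^sub>R s1 + (b/(a+b)) *\<^sub>R s2"
    have "?s \<in> S" using cS s(1,2) a b pos unfolding convex_def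
      by (metis add_divide_distrib divide_nonneg_pos divide_self_if False)
    moreover have "x + y = (a+b) *\<^sub>R ?s" using s pos
      by (simp add: scaleR_add_right)
    ultimately show ?thesis by blast
  qed
qed

lemma omega_scale:
  assumes "\<xi> \<in> OmegaT H" "0 \<le> \<eta>" "\<eta> \<le> 1" shows "\<eta> *\<^sub>R \<xi> \<in> OmegaT H"
proof -
  have "\<bar>(H *v (\<eta> *\<^sub>R \<xi>)) $ i\<bar> \<le> 1" for i
  proof -
    have "\<bar>(H *v \<xi>) $ i\<bar> \<le> 1" using assms(1) unfolding OmegaT_def by (simp add: abs_le_iff)
    moreover have "(H *v (\<eta> *\<^sub>R \<xi>)) $ i = \<eta> * (H *v \<xi>) $ i"
      by (simp add: matrix_vector_mult_def sum_distrib_left algebra_simps)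
    ultimately show ?thesis using assms(2,3)
      by (simp add: abs_mult) (metis abs_ge_zero mult_le_one)
  qed
  then show ?thesis unfolding OmegaT_def by (auto simp: abs_le_iff)
qed

lemma zero_omega: "0 \<in> OmegaT H" unfolding OmegaT_def by simp

lemma bigmsum_char:
  assumes "x \<in> bigmsum (\<lambda>i. g i ` Z) N"
  shows "\<exists>z. (\<forall>i. z i \<in> Z) \<and> x = (\<Sum>i\<le>N. g i (z i))"
  using assms
proof (induction N arbitrary: x)
  case 0
  then obtain z0 where "z0 \<in> Z" "x = g 0 z0" by auto
  then show ?case by (intro exI[of _ "\<lambda>_. z0"]) auto
next
  case (Suc N)
  from Suc.prems obtain a b where ab: "a \<in> bigmsum (\<lambda>i. g i ` Z) N" "b \<in> g (Suc N) ` Z" "x = a + b"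
    by (auto simp: msum_def)
  obtain z where z: "\<forall>i. z i \<in> Z" "a = (\<Sum>i\<le>N. g i (z i))" using Suc.IH ab(1) by blast
  obtain z' where z': "z' \<in> Z" "b = g (Suc N) z'" using ab(2) by blast
  let ?z = "z(Suc N := z')"
  have "(\<Sum>i\<le>N. g i (?z i)) = (\<Sum>i\<le>N. g i (z i))" by (intro sum.cong) auto
  then have "x = (\<Sum>i\<le>Suc N. g i (?z i))" using ab(3) z z' by simp
  moreover have "\<forall>i. ?z i \<in> Z" using z z' by auto
  ultimately show ?case by blast
qed

lemma sum_invariant:
  fixes M :: "real^'m^'m" and Bm :: "real^'z^'m"
  assumes C: "msum ((\<lambda>\<xi>. M *v \<xi>) ` OmegaT H) ((\<lambda>z. Bm *v z) ` Z) \<subseteq> (\<lambda>\<xi>. \<eta> *\<^sub>R \<xi>) ` OmegaT H"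
    and eta: "0 \<le> \<eta>" "\<eta> \<le> 1"
  shows "\<forall>z. (\<forall>i. z i \<in> Z) \<longrightarrow> (\<Sum>i\<le>N. matpow M i *v (Bm *v z i)) \<in> (\<lambda>\<xi>. \<eta> *\<^sub>R \<xi>) ` OmegaT H"
proof (induction N)
  case 0
  show ?case
  proof (intro allI impI)
    fix z :: "nat \<Rightarrow> real^'z" assume z: "\<forall>i. z i \<in> Z"
    have "M *v 0 + Bm *v z 0 \<in> msum ((\<lambda>\<xi>. M *v \<xi>) ` OmegaT H) ((\<lambda>z. Bm *v z) ` Z)"
      unfolding msum_def using z zero_omega by blast
    then show "(\<Sum>i\<le>0. matpow M i *v (Bm *v z i)) \<in> (\<lambda>\<xi>. \<eta> *\<^sub>R \<xi>) ` OmegaT H"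
      using C by (simp add: subset_iff)
  qed
next
  case (Suc N)
  show ?case
  proof (intro allI impI)
    fix z :: "nat \<Rightarrow> real^'z" assume z: "\<forall>i. z i \<in> Z"
    let ?g = "\<lambda>i. matpow M i *v (Bm *v z (Suc i))"
    have zs: "\<And>i. (z \<circ> Suc) i \<in> Z" using z by auto
    have "(\<Sum>i\<le>N. ?g i) \<in> (\<lambda>\<xi>. \<eta> *\<^sub>R \<xi>) ` OmegaT H"
      using Suc.IH[rule_format, OF zs] by (simp add: o_def)
    then have inO: "(\<Sum>i\<le>N. ?g i) \<in> OmegaT H" using omega_scale[OF _ eta] by auto
    have "(\<Sum>i\<le>Suc N. matpow M i *v (Bm *v z i)) = Bm *v z 0 + (\<Sum>i\<le>N. M *v ?g i)"
      unfolding sum.atMost_Suc_shift by (simp add: matrix_vector_mul_assoc del: matpow.simps)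
        (simp add: matrix_vector_mul_assoc[symmetric])
    also have "(\<Sum>i\<le>N. M *v ?g i) = M *v (\<Sum>i\<le>N. ?g i)"
      by (simp add: linear_sum[OF matrix_vector_mul_linear] o_def)
    finally have eq: "(\<Sum>i\<le>Suc N. matpow M i *v (Bm *v z i)) = M *v (\<Sum>i\<le>N. ?g i) + Bm *v z 0"
      by simp
    have "M *v (\<Sum>i\<le>N. ?g i) + Bm *v z 0 \<in> msum ((\<lambda>\<xi>. M *v \<xi>) ` OmegaT H) ((\<lambda>z. Bm *v z) ` Z)"
      unfolding msum_def using z inO by blast
    then show "(\<Sum>i\<le>Suc N. matpow M i *v (Bm *v z i)) \<in> (\<lambda>\<xi>. \<eta> *\<^sub>R \<xi>) ` OmegaT H"
      using C eq by (simp add: subset_iff)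
  qed
qed

lemma schur_core:
  fixes M H :: "real^'m^'m"
  assumes ker: "\<And>x. H *v x = 0 \<Longrightarrow> x = 0"
    and step: "\<And>x t i. t \<ge> 0 \<Longrightarrow> (\<forall>i. \<bar>(H *v x)$i\<bar> \<le> t) \<Longrightarrow> \<bar>(H *v (M *v x))$i\<bar> \<le> \<eta>*t"
    and eta: "0 \<le> \<eta>" "\<eta> < 1"
  shows "schur M"
  unfolding schur_def
proof (intro allI impI, elim conjE)
  fix c :: complex and v :: "complex^'m"
  assume v0: "v \<noteq> 0" and ev: "(\<chi> i j. complex_of_real (M $ i $ j)) *v v = c *s v"
  define xr where "xr u = (\<chi> j. Re (u * v$j))" for u
  have evk: "(\<Sum>j\<in>UNIV. complex_of_real (M$k$j) * v$j) = c * v$k" for k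
    using ev by (simp add: vec_eq_iff matrix_vector_mult_def)
  have Mxr: "M *v xr u = xr (u*c)" for u
  proof -
    have "(M *v xr u)$k = xr (u*c) $ k" for k
    proof -
      have "(M *v xr u)$k = (\<Sum>j\<in>UNIV. Re (u * (complex_of_real (M$k$j) * v$j)))"
        by (simp add: matrix_vector_mult_def xr_def algebra_simps)
      also have "\<dots> = Re (u * (\<Sum>j\<in>UNIV. complex_of_real (M$k$j) * v$j))"
        by (simp add: sum_distrib_left Re_sum)
      also have "\<dots> = xr (u*c) $ k" using evk[of k] by (simp add: xr_def mult.assoc)
      finally show ?thesis .
    qed
    then show ?thesis by (simp add: vec_eq_iff)
  qed
  have xr_scale: "xr (complex_of_real r * u) = r *\<^sub>R xr u" for r u
    by (simp add: xr_def vec_eq_iff mult.assoc)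
  have Hscale: "H *v (r *\<^sub>R x) = r *\<^sub>R (H *v x)" for r x
    by (simp add: vec_eq_iff matrix_vector_mult_def sum_distrib_left algebra_simps)
  define Sset where "Sset = {\<bar>(H *v xr u)$i\<bar> | u i. cmod u = 1}"
  define K where "K = onorm ((*v) H) * (\<Sum>j\<in>UNIV. cmod (v$j))"
  have bnd: "y \<le> K" if yS: "y \<in> Sset" for y
  proof -
    obtain u i where ui: "cmod u = 1" "y = \<bar>(H *v xr u)$i\<bar>" using yS Sset_def by blast
    have "y \<le> norm (H *v xr u)" using ui component_le_norm_cart by metis
    also have "\<dots> \<le> onorm ((*v) H) * norm (xr u)" using onorm[OF matrix_vector_mul_bounded_linear] by blast
    also have "\<dots> \<le> onorm ((*v) H) * (\<Sum>j\<in>UNIV. cmod (v$j))"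
    proof (rule mult_left_mono)
      show "0 \<le> onorm ((*v) H)" using onorm_pos_le[OF matrix_vector_mul_bounded_linear] by blast
      have "norm (xr u) \<le> (\<Sum>j\<in>UNIV. \<bar>xr u $ j\<bar>)" by (rule norm_le_l1_cart)
      also have "\<dots> \<le> (\<Sum>j\<in>UNIV. cmod (v$j))"
      proof (rule sum_mono)
        fix j
        have "\<bar>xr u $ j\<bar> \<le> cmod (u * v$j)" unfolding xr_def using abs_Re_le_cmod[of "u * v$j"] by simp
        also have "\<dots> = cmod (v$j)" using ui(1) by (simp add: norm_mult)
        finally show "\<bar>xr u $ j\<bar> \<le> cmod (v$j)" .
      qed
      finally show "norm (xr u) \<le> (\<Sum>j\<in>UNIV. cmod (v$j))" .
    qed
    finally show ?thesis unfolding K_def .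
  qed
  have bdd: "bdd_above Sset" using bnd by (rule bdd_aboveI)
  define Mx where "Mx = Sup Sset"
  have upper: "\<bar>(H *v xr u)$i\<bar> \<le> Mx" if "cmod u = 1" for u i
    unfolding Mx_def using that bdd by (auto intro!: cSup_upper simp: Sset_def)
  have "\<bar>(H *v xr 1)$i\<bar> \<in> Sset" for i unfolding Sset_def
    by (rule CollectI, rule exI[of _ 1], rule exI[of _ i]) simp
  then have ne: "Sset \<noteq> {}" by blast
  obtain j where j: "v$j \<noteq> 0" using v0 by (auto simp: vec_eq_iff)
  obtain u where u: "cmod u = 1" "xr u \<noteq> 0"
  proof (cases "Re (v$j) = 0")
    case True
    then have "Im (v$j) \<noteq> 0" using j complex_eq_iff by auto
    then have "xr (- \<i>) $ j \<noteq> 0" by (simp add: xr_def)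
    then have "xr (- \<i>) \<noteq> 0" by (metis zero_index)
    then show ?thesis using that[of "- \<i>"] by simp
  next
    case False
    then have "xr 1 $ j \<noteq> 0" by (simp add: xr_def)
    then have "xr 1 \<noteq> 0" by (metis zero_index)
    then show ?thesis using that[of 1] by simp
  qed
  then have "H *v xr u \<noteq> 0" using ker by blast
  then obtain i where i: "(H *v xr u)$i \<noteq> 0" by (auto simp: vec_eq_iff)
  have Mpos: "Mx > 0" using upper[OF u(1), of i] i by linarith
  have Mnn: "Mx \<ge> 0" using Mpos by simp
  show "cmod c < 1"
  proof (cases "c = 0")
    case True then show ?thesis by simp
  next
    case False
    then have cpos: "cmod c > 0" by simp
    have key: "y \<le> \<eta> * Mx / cmod c" if yS: "y \<in> Sset" for y
    proof -
      obtain u i where ui: "cmod u = 1" "y = \<bar>(H *v xr u)$i\<bar>" using yS Sset_def by blast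
      define u0 where "u0 = u * cnj c / complex_of_real (cmod c)"
      have u0n: "cmod u0 = 1" using ui(1) cpos by (simp add: u0_def norm_mult norm_divide)
      have cc: "c * cnj c = complex_of_real (cmod c) * complex_of_real (cmod c)"
        using complex_norm_square[of c] by (simp add: power2_eq_square)
      have "u0 * c = complex_of_real (cmod c) * u"
        using cpos cc by (simp add: u0_def field_simps complex_norm_square power2_eq_square)
      then have "M *v xr u0 = cmod c *\<^sub>R xr u" using Mxr xr_scale by simp
      moreover have "\<bar>(H *v (M *v xr u0))$i\<bar> \<le> \<eta> * Mx"
        using step[OF Mnn] upper[OF u0n] by blast
      ultimately have "cmod c * y \<le> \<eta> * Mx" using ui(2) Hscale cpos by (simp add: abs_mult)
      then show ?thesis using cpos by (simp add: field_simps)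
    qed
    have "Sup Sset \<le> \<eta> * Mx / cmod c" using ne key by (rule cSup_least)
    then have "Mx \<le> \<eta> * Mx / cmod c" unfolding Mx_def .
    then have "cmod c * Mx \<le> \<eta> * Mx" using cpos by (simp add: field_simps)
    then have "cmod c \<le> \<eta>" using Mpos by simp
    then show ?thesis using eta by simp
  qed
qed

lemma mv_scale: "(A::real^'a^'b) *v (r *\<^sub>R x) = r *\<^sub>R (A *v x)"
  by (simp add: vec_eq_iff matrix_vector_mult_def sum_distrib_left algebra_simps)

lemma linear_proj1: "linear (proj1 :: real^('n + 'k::finite) \<Rightarrow> real^'n)"
  by (rule linearI) (simp_all add: proj1_def vec_eq_iff)

lemma PinPD: "P \<subseteq> pdiff (msum P N) N"
  unfolding pdiff_def msum_def by blast

theorem theorem2: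
  fixes A :: "real^'n^'n" and B :: "real^'u^'n"
    and AK :: "real^'k^'k" and BK :: "real^'n^'k" and CK :: "real^'k^'u" and DK :: "real^'n^'u"
    and W V D S X :: "(real^'n) set"
    and \<epsilon>p \<epsilon>m \<epsilon>s \<eta> :: real
    and HI :: "real^('n + 'k)^('n + 'k)"
  assumes polyW: "polytope W" and intW: "0 \<in> interior W"
    and polyV: "polytope V" and intV: "0 \<in> interior V"
    and polyD: "polytope D" and intD: "0 \<in> interior D"
    and polyS: "polytope S" and intS: "0 \<in> interior S"
    and polyX: "polytope X" and intX: "0 \<in> interior X"
    and SX: "S \<subseteq> X"
    and ep: "0 < \<epsilon>p" "\<epsilon>p < 1" and em: "0 < \<epsilon>m" "\<epsilon>m < 1"
    and Vp: "V \<subseteq> (\<lambda>s. \<epsilon>p *\<^sub>R s) ` S"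
    and Vm: "uminus ` V \<subseteq> (\<lambda>s. \<epsilon>m *\<^sub>R s) ` S"
    and ballS: "\<exists>r>0. cball 0 r \<subseteq> S"
    and inv: "msum (msum ((\<lambda>x. A *v x) ` S) W) D \<subseteq> X"
    and eta: "0 < \<eta>" "\<eta> < 1"
    and detH: "det HI \<noteq> 0"
    and es: "\<epsilon>p + \<epsilon>m < \<epsilon>s" "\<epsilon>s < 1"
    and C1: "msum ((\<lambda>\<xi>. ACL A B AK BK CK DK *v \<xi>) ` OmegaT HI)
                  ((\<lambda>z. BCL B BK DK *v z) ` Zset W V)
             \<subseteq> (\<lambda>\<xi>. \<eta> *\<^sub>R \<xi>) ` OmegaT HI"
    and C2: "proj1 ` OmegaT HI \<subseteq> (\<lambda>s. (\<epsilon>s - \<epsilon>p - \<epsilon>m) *\<^sub>R s) ` S"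
  shows "(let \<Omega>I = msum (proj1 ` OmegaT HI) (msum (uminus ` V) V);
              Nset = msum (uminus ` V) V
          in \<Omega>I \<subseteq> (\<lambda>s. \<epsilon>s *\<^sub>R s) ` S
           \<and> {r. norm r \<le> 1 / onorm (\<lambda>x. HI *v x)} \<subseteq> pdiff \<Omega>I Nset
           \<and> (\<forall>N. bigmsum (\<lambda>i. (\<lambda>z. proj1 (matpow (ACL A B AK BK CK DK) i *v (BCL B BK DK *v z)))
                                   ` Zset W V) N
                  \<subseteq> (\<lambda>x. \<eta> *\<^sub>R x) ` pdiff \<Omega>I Nset))
         \<and> schur (ACL A B AK BK CK DK)"
proof -
  let ?A = "ACL A B AK BK CK DK" and ?B = "BCL B BK DK" and ?Z = "Zset W V" and ?O = "OmegaT HI"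
  let ?P = "proj1 ` ?O" and ?N = "msum (uminus ` V) V"
  have cS: "convex S" using polyS polytope_imp_convex by blast
  have W0: "0 \<in> W" using intW interior_subset by blast
  have V0: "0 \<in> V" using intV interior_subset by blast
  have z0: "(\<chi> i. (0::real)) = (0::real^'n)" by (simp add: vec_eq_iff)
  have Z0: "0 \<in> ?Z" using W0 V0 by (simp add: Zset_def z0)
  have ker: "\<And>x. HI *v x = 0 \<Longrightarrow> x = 0" using ker_lemma detH by blast
  have part1: "msum ?P ?N \<subseteq> (\<lambda>s. \<epsilon>s *\<^sub>R s) ` S"
  proof
    fix x assume "x \<in> msum ?P ?N"
    then obtain p a b where pab: "p \<in> ?P" "a \<in> uminus ` V" "b \<in> V" "x = p + (a + b)"
      unfolding msum_def by blast
    have p: "p \<in> (\<lambda>s. (\<epsilon>s - \<epsilon>p - \<epsilon>m) *\<^sub>R s) ` S" using pab(1) C2 by blast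
    have a: "a \<in> (\<lambda>s. \<epsilon>m *\<^sub>R s) ` S" using pab(2) Vm by blast
    have b: "b \<in> (\<lambda>s. \<epsilon>p *\<^sub>R s) ` S" using pab(3) Vp by blast
    have ab: "a + b \<in> (\<lambda>s. (\<epsilon>m + \<epsilon>p) *\<^sub>R s) ` S"
      using conv_add[OF cS _ _ a b] ep em by simp
    have "p + (a + b) \<in> (\<lambda>s. ((\<epsilon>s - \<epsilon>p - \<epsilon>m) + (\<epsilon>m + \<epsilon>p)) *\<^sub>R s) ` S"
      using conv_add[OF cS _ _ p ab] ep em es by simp
    moreover have "(\<epsilon>s - \<epsilon>p - \<epsilon>m) + (\<epsilon>m + \<epsilon>p) = \<epsilon>s" by simp
    ultimately show "x \<in> (\<lambda>s. \<epsilon>s *\<^sub>R s) ` S" using pab(4) by simp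
  qed
  have part2: "{r. norm r \<le> 1 / onorm (\<lambda>x. HI *v x)} \<subseteq> pdiff (msum ?P ?N) ?N"
  proof
    fix r :: "real^'n" assume "r \<in> {r. norm r \<le> 1 / onorm (\<lambda>x. HI *v x)}"
    then have r: "norm r \<le> 1 / onorm (\<lambda>x. HI *v x)" by simp
    define \<xi> :: "real^('n+'k)" where "\<xi> = (\<chi> i. case i of Inl a \<Rightarrow> r$a | Inr _ \<Rightarrow> 0)"
    have pr: "proj1 \<xi> = r" by (simp add: proj1_def \<xi>_def vec_eq_iff)
    have nx: "norm \<xi> = norm r"
      by (simp add: norm_vec_def L2_set_def \<xi>_def UNIV_Plus_UNIV[symmetric] sum.Plus o_def
          del: UNIV_Plus_UNIV)
    have on: "0 \<le> onorm (\<lambda>x. HI *v x)" using onorm_pos_le[OF matrix_vector_mul_bounded_linear] by blast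
    have prod: "onorm (\<lambda>x. HI *v x) * norm r \<le> 1"
    proof (cases "onorm (\<lambda>x. HI *v x) = 0")
      case True then show ?thesis by simp
    next
      case False
      then have "onorm (\<lambda>x. HI *v x) > 0" using on by simp
      then show ?thesis using r by (simp add: field_simps)
    qed
    have "\<bar>(HI *v \<xi>)$i\<bar> \<le> 1" for i
    proof -
      have "\<bar>(HI *v \<xi>)$i\<bar> \<le> norm (HI *v \<xi>)" by (rule component_le_norm_cart)
      also have "\<dots> \<le> onorm (\<lambda>x. HI *v x) * norm \<xi>"
        using onorm[OF matrix_vector_mul_bounded_linear] by blast
      finally show ?thesis using prod nx by simp
    qed
    then have "\<xi> \<in> ?O" unfolding OmegaT_def by (auto simp: abs_le_iff)
    then have "r \<in> ?P" using pr by blast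
    then show "r \<in> pdiff (msum ?P ?N) ?N" using PinPD by blast
  qed
  have part3: "bigmsum (\<lambda>i. (\<lambda>z. proj1 (matpow ?A i *v (?B *v z))) ` ?Z) N
                  \<subseteq> (\<lambda>x. \<eta> *\<^sub>R x) ` pdiff (msum ?P ?N) ?N" for N
  proof
    fix x assume "x \<in> bigmsum (\<lambda>i. (\<lambda>z. proj1 (matpow ?A i *v (?B *v z))) ` ?Z) N"
    then obtain z where z: "\<forall>i. z i \<in> ?Z" "x = (\<Sum>i\<le>N. proj1 (matpow ?A i *v (?B *v z i)))"
      using bigmsum_char[of x "\<lambda>i z. proj1 (matpow ?A i *v (?B *v z))" ?Z N] by blast
    have "x = proj1 (\<Sum>i\<le>N. matpow ?A i *v (?B *v z i))"
      using z(2) by (simp add: linear_sum[OF linear_proj1] o_def)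
    moreover have "(\<Sum>i\<le>N. matpow ?A i *v (?B *v z i)) \<in> (\<lambda>\<xi>. \<eta> *\<^sub>R \<xi>) ` ?O"
      using sum_invariant[OF C1, of N] eta z(1) by simp
    ultimately obtain \<zeta> where "\<zeta> \<in> ?O" "x = proj1 (\<eta> *\<^sub>R \<zeta>)" by (auto simp del: proj1_def)
    then have "x = \<eta> *\<^sub>R proj1 \<zeta>" "proj1 \<zeta> \<in> pdiff (msum ?P ?N) ?N"
      using linear_scale[OF linear_proj1] PinPD[of ?P ?N] by auto
    then show "x \<in> (\<lambda>x. \<eta> *\<^sub>R x) ` pdiff (msum ?P ?N) ?N" by blast
  qed
  have step: "\<bar>(HI *v (?A *v x))$i\<bar> \<le> \<eta>*t"
    if t: "t \<ge> 0" and hx: "\<forall>i. \<bar>(HI *v x)$i\<bar> \<le> t" for x t i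
  proof (cases "t = 0")
    case True
    then have "HI *v x = 0" using hx by (simp add: vec_eq_iff)
    then have "x = 0" using ker by blast
    then show ?thesis using t eta by simp
  next
    case False
    then have tp: "t > 0" using t by simp
    define \<xi> where "\<xi> = (1/t) *\<^sub>R x"
    have "\<bar>(HI *v \<xi>)$i\<bar> \<le> 1" for i
      using hx tp by (simp add: \<xi>_def mv_scale abs_mult field_simps)
    then have xiO: "\<xi> \<in> ?O" unfolding OmegaT_def by (auto simp: abs_le_iff)
    have "?A *v \<xi> + ?B *v 0 \<in> msum ((\<lambda>\<xi>. ?A *v \<xi>) ` ?O) ((\<lambda>z. ?B *v z) ` ?Z)"
      unfolding msum_def using xiO Z0 by blast
    then have "?A *v \<xi> \<in> (\<lambda>\<xi>. \<eta> *\<^sub>R \<xi>) ` ?O" using C1 by (simp add: subset_iff)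
    then obtain \<zeta> where zeta: "\<zeta> \<in> ?O" "?A *v \<xi> = \<eta> *\<^sub>R \<zeta>" by blast
    have "x = t *\<^sub>R \<xi>" using tp by (simp add: \<xi>_def)
    then have "HI *v (?A *v x) = (t * \<eta>) *\<^sub>R (HI *v \<zeta>)" using zeta(2) by (simp add: mv_scale)
    moreover have "\<bar>(HI *v \<zeta>)$i\<bar> \<le> 1" using zeta(1) unfolding OmegaT_def by (simp add: abs_le_iff)
    ultimately show ?thesis using tp eta by (simp add: abs_mult mult_left_le)
  qed
  have part4: "schur ?A"
    by (rule schur_core[OF ker step]) (use eta in auto)
  show ?thesis unfolding Let_def using part1 part2 part3 part4 by blast
qed

end
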